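(* Let $T:V\to\mathfrak g$ be an $\mathcal O$-operator on a Lie algebra $\mathfrak g$ with respect to a representation $(V;\rho)$. If $\mathcal Z^1(V,\mathfrak g)=d_{\bar\rho}(\mathrm{Nij}(T))$, then $T$ is rigid.
   Context: An $\mathcal O$-operator: linear $T:V\to\mathfrak g$ with $[Tu,Tv]=T(\rho(Tu)(v)-\rho(Tv)(u))$. $\bar\rho(u)(y)=[Tu,y]+T\rho(y)(u)$; $d_{\bar\rho}y(u)=[Tu,y]+T\rho(y)(u)$ for $y\in\mathfrak g$; $\mathcal Z^1(V,\mathfrak g)$ is the set of linear $f:V\to\mathfrak g$ with $[Tu,f(v)]-[Tv,f(u)]-T(\rho(f(u))(v)-\rho(f(v))(u))-f(\rho(Tu)(v)-\rho(Tv)(u))=0$ for all $u,v$. $\mathrm{Nij}(T)$ is the set of $x\in\mathfrak g$ with $[[x,y],[x,z]]=0$ and $\rho([x,y])\rho(x)=0$ for all $y,z\in\mathfrak g$, and $[x,[Tu,x]+T\rho(x)(u)]=0$ for all $u\in V$. A one-parameter formal deformation of $T$: $T_t=\sum_{i\ge0}\tau_it^i$, $\tau_i\in\mathrm{Hom}(V,\mathfrak g)$, $\tau_0=T$, extended $\mathbb K[[t]]$-linearly, with $[T_t(u),T_t(v)]=T_t(\rho(T_t(u))(v)-\rho(T_t(v))(u))$ in $\mathfrak g[[t]]$. Two formal deformations $\overline T_t,T_t$ are equivalent if there exist $x\in\mathfrak g$, $\phi_i\in\mathfrak{gl}(\mathfrak g)$, $\varphi_i\in\mathfrak{gl}(V)$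 ($i\ge2$) with $\phi_t=\mathrm{Id}_{\mathfrak g}+t\,\mathrm{ad}_x+\sum_{i\ge2}\phi_it^i$, $\varphi_t=\mathrm{Id}_V+t\rho(x)+\sum_{i\ge2}\varphi_it^i$ satisfying $[\phi_t(y),\phi_t(z)]=\phi_t[y,z]$, $T_t\circ\varphi_t=\phi_t\circ\overline T_t$, and $\varphi_t\rho(y)u=\rho(\phi_t(y))\varphi_t(u)$. A formal deformation is trivial if it is equivalent to $T$ (regarded as a deformation of itself), and $T$ is rigid if every one-parameter formal deformation of $T$ is trivial. *)

theory Defs
  imports Complex_Main
begin

text \<open>Lie algebra g over a field 'k: carrier type 'g with scalar multiplication sg and bracket br.
Representation (V; rho): carrier type 'v with scalar multiplication sv.\<close>

definition lie_algebra :: "('k::field \<Rightarrow> 'g \<Rightarrow> 'g::ab_group_add) \<Rightarrow> ('g \<Rightarrow> 'g \<Rightarrow> 'g) \<Rightarrow> bool" where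
  "lie_algebra sg br \<longleftrightarrow> vector_space sg
     \<and> (\<forall>x. Vector_Spaces.linear sg sg (br x))
     \<and> (\<forall>y. Vector_Spaces.linear sg sg (\<lambda>x. br x y))
     \<and> (\<forall>x. br x x = 0)
     \<and> (\<forall>x y z. br x (br y z) + br y (br z x) + br z (br x y) = 0)"

definition lie_rep :: "('k::field \<Rightarrow> 'g \<Rightarrow> 'g::ab_group_add) \<Rightarrow> ('g \<Rightarrow> 'g \<Rightarrow> 'g)
    \<Rightarrow> ('k \<Rightarrow> 'v \<Rightarrow> 'v::ab_group_add) \<Rightarrow> ('g \<Rightarrow> 'v \<Rightarrow> 'v) \<Rightarrow> bool" where
  "lie_rep sg br sv \<rho> \<longleftrightarrow> lie_algebra sg br \<and> vector_space sv
     \<and> (\<forall>x. Vector_Spaces.linear sv sv (\<rho> x))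
     \<and> (\<forall>u. Vector_Spaces.linear sg sv (\<lambda>x. \<rho> x u))
     \<and> (\<forall>x y u. \<rho> (br x y) u = \<rho> x (\<rho> y u) - \<rho> y (\<rho> x u))"

definition O_operator where
  "O_operator sg br sv \<rho> T \<longleftrightarrow> lie_rep sg br sv \<rho> \<and> Vector_Spaces.linear sv sg T
     \<and> (\<forall>u v. br (T u) (T v) = T (\<rho> (T u) v - \<rho> (T v) u))"

definition d_rhobar :: "('g \<Rightarrow> 'g \<Rightarrow> 'g) \<Rightarrow> ('g \<Rightarrow> 'v \<Rightarrow> 'v) \<Rightarrow> ('v \<Rightarrow> 'g) \<Rightarrow> 'g \<Rightarrow> 'v \<Rightarrow> 'g::ab_group_add" where
  "d_rhobar br \<rho> T y = (\<lambda>u. br (T u) y + T (\<rho> y u))"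

definition Z1 where
  "Z1 sg br sv \<rho> T = {f. Vector_Spaces.linear sv sg f \<and>
     (\<forall>u v. br (T u) (f v) - br (T v) (f u) - T (\<rho> (f u) v - \<rho> (f v) u)
            - f (\<rho> (T u) v - \<rho> (T v) u) = 0)}"

definition Nij where
  "Nij br \<rho> T = {x. (\<forall>y z. br (br x y) (br x z) = 0)
     \<and> (\<forall>y u. \<rho> (br x y) (\<rho> x u) = 0)
     \<and> (\<forall>u. br x (br (T u) x + T (\<rho> x u)) = 0)}"

text \<open>A one-parameter formal deformation T_t = sum tau_i t^i, tau_0 = T, as the coefficient
sequence tau; the identity in g[[t]] is imposed coefficientwise (Cauchy products).\<close>
definition formal_deformation where
  "formal_deformation sg br sv \<rho> T \<tau> \<longleftrightarrow> \<tau> 0 = T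
     \<and> (\<forall>i::nat. Vector_Spaces.linear sv sg (\<tau> i))
     \<and> (\<forall>(n::nat) u v. (\<Sum>i\<le>n. br (\<tau> i u) (\<tau> (n - i) v))
               = (\<Sum>i\<le>n. \<tau> i (\<rho> (\<tau> (n - i) u) v - \<rho> (\<tau> (n - i) v) u)))"

text \<open>Equivalence of formal deformations Tbar_t (coefficients \<tau>b) and T_t (coefficients \<tau>):
phi_t = sum phi_i t^i on g, varphi_t = sum varphi_i t^i on V; all identities coefficientwise.\<close>
definition deformations_equivalent where
  "deformations_equivalent sg br sv \<rho> \<tau>b \<tau> \<longleftrightarrow>
     (\<exists>x \<phi> \<psi>.
        \<phi> 0 = id \<and> \<phi> 1 = br x \<and> (\<forall>i::nat. Vector_Spaces.linear sg sg (\<phi> i))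
      \<and> \<psi> 0 = id \<and> \<psi> 1 = \<rho> x \<and> (\<forall>i::nat. Vector_Spaces.linear sv sv (\<psi> i))
      \<and> (\<forall>(n::nat) y z. (\<Sum>i\<le>n. br (\<phi> i y) (\<phi> (n - i) z)) = \<phi> n (br y z))
      \<and> (\<forall>(n::nat) u. (\<Sum>i\<le>n. \<tau> i (\<psi> (n - i) u)) = (\<Sum>i\<le>n. \<phi> i (\<tau>b (n - i) u)))
      \<and> (\<forall>(n::nat) y u. \<psi> n (\<rho> y u) = (\<Sum>i\<le>n. \<rho> (\<phi> i y) (\<psi> (n - i) u))))"

definition trivial_deformation where
  "trivial_deformation sg br sv \<rho> T \<tau> \<longleftrightarrow>
     deformations_equivalent sg br sv \<rho> \<tau> (\<lambda>i. if (i::nat) = 0 then T else (\<lambda>_. 0))"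

definition rigid where
  "rigid sg br sv \<rho> T \<longleftrightarrow>
     (\<forall>\<tau>. formal_deformation sg br sv \<rho> T \<tau> \<longrightarrow> trivial_deformation sg br sv \<rho> T \<tau>)"

end

theory Submission
  imports Defs
begin


definition addf :: "('a::ab_group_add \<Rightarrow> 'b::ab_group_add) \<Rightarrow> bool" where
  "addf f \<longleftrightarrow> (\<forall>x y. f (x + y) = f x + f y)"

lemma addf_0: "addf f \<Longrightarrow> f 0 = 0"
proof -
  assume "addf f"
  then have "f (0 + 0) = f 0 + f 0" unfolding addf_def by blast
  then show ?thesis by simp
qed

lemma addf_add: "addf f \<Longrightarrow> f (x + y) = f x + f y"
  unfolding addf_def by blast

lemma addf_minus: assumes a: "addf f" shows "f (- x) = - f x"
proof -
  have "f (- x) + f x = 0" using addf_add[OF a, of "- x" x] addf_0[OF a] by simp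
  then show ?thesis by (simp add: add_eq_0_iff)
qed

lemma addf_diff: assumes a: "addf f" shows "f (x - y) = f x - f y"
proof -
  have "f (x - y) = f (x + - y)" by simp
  also have "\<dots> = f x + - f y" using addf_add[OF a, of x "- y"] addf_minus[OF a, of y] by simp
  finally show ?thesis by simp
qed

lemma addf_sum:
  assumes a: "addf f"
  shows "f (sum g S) = (\<Sum>x\<in>S. f (g x))"
proof (cases "finite S")
  case True
  then show ?thesis
  proof (induct rule: finite_induct)
    case empty
    then show ?case using addf_0[OF a] by simp
  next
    case (insert x F)
    then show ?case using addf_add[OF a] by simp
  qed
next
  case False
  then show ?thesis using addf_0[OF a] by simp
qed

lemma linear_addf: "Vector_Spaces.linear s1 s2 f \<Longrightarrow> addf f"
  by (simp add: Vector_Spaces.linear_iff addf_def)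

definition conv :: "('a \<Rightarrow> 'b \<Rightarrow> 'c::comm_monoid_add) \<Rightarrow> (nat \<Rightarrow> 'a) \<Rightarrow> (nat \<Rightarrow> 'b) \<Rightarrow> nat \<Rightarrow> 'c" where
  "conv f A B = (\<lambda>n. \<Sum>i\<le>n. f (A i) (B (n - i)))"

definition app :: "(nat \<Rightarrow> 'a \<Rightarrow> 'b::comm_monoid_add) \<Rightarrow> (nat \<Rightarrow> 'a) \<Rightarrow> nat \<Rightarrow> 'b" where
  "app F u = conv (\<lambda>f x. f x) F u"

definition mcomp :: "(nat \<Rightarrow> 'b \<Rightarrow> 'c::comm_monoid_add) \<Rightarrow> (nat \<Rightarrow> 'a \<Rightarrow> 'b) \<Rightarrow> nat \<Rightarrow> 'a \<Rightarrow> 'c" where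
  "mcomp F G = (\<lambda>n x. \<Sum>i\<le>n. F i (G (n - i) x))"

definition sh :: "nat \<Rightarrow> (nat \<Rightarrow> 'a::zero) \<Rightarrow> nat \<Rightarrow> 'a" where
  "sh k w = (\<lambda>n. if k \<le> n then w (n - k) else 0)"

definition d0 :: "'a::zero \<Rightarrow> nat \<Rightarrow> 'a" where
  "d0 a = (\<lambda>n. if n = 0 then a else 0)"

definition idser :: "nat \<Rightarrow> 'a::zero \<Rightarrow> 'a" where
  "idser = (\<lambda>n. if n = 0 then id else (\<lambda>_. 0))"

definition Aser :: "nat \<Rightarrow> ('a::zero \<Rightarrow> 'a) \<Rightarrow> nat \<Rightarrow> 'a \<Rightarrow> 'a" where
  "Aser k M = (\<lambda>n. if n = 0 then id else if n = k then M else (\<lambda>_. 0))"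

lemma tri:
  fixes f :: "nat \<Rightarrow> nat \<Rightarrow> nat \<Rightarrow> 'a::comm_monoid_add"
  shows "(\<Sum>j\<le>k. \<Sum>i\<le>j. f i (j - i) (n - j)) = (\<Sum>j\<le>k. \<Sum>i\<le>k - j. f j i (n - j - i))"
  by (induct k) (simp_all add: Suc_diff_le sum.distrib add.assoc)


lemma sum_rev_atMost: "(\<Sum>i\<le>(n::nat). g i) = (\<Sum>i\<le>n. g (n - i))"
  by (rule sum.reindex_bij_witness[where i="\<lambda>i. n - i" and j="\<lambda>i. n - i"]) auto

lemma conv_swap: "conv f A B n = conv (\<lambda>b a. f a b) B A n"
proof -
  have "conv f A B n = (\<Sum>i\<le>n. f (A (n - i)) (B (n - (n - i))))"
    unfolding conv_def by (rule sum_rev_atMost)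
  also have "\<dots> = conv (\<lambda>b a. f a b) B A n"
    unfolding conv_def by (rule sum.cong) auto
  finally show ?thesis .
qed

lemma conv_sh2:
  assumes z: "\<And>i. f (A i) 0 = 0"
  shows "conv f A (sh k B) n = sh k (conv f A B) n"
proof (cases "k \<le> n")
  case True
  have "conv f A (sh k B) n = (\<Sum>i\<le>n. f (A i) (if k \<le> n - i then B (n - i - k) else 0))"
    unfolding conv_def sh_def by simp
  also have "\<dots> = (\<Sum>i\<le>n - k. f (A i) (B (n - k - i)))"
    by (rule sum.mono_neutral_cong_right) (use True in \<open>auto simp: z add.commute\<close>)
  also have "\<dots> = sh k (conv f A B) n" using True unfolding sh_def conv_def by simp
  finally show ?thesis .
next
  case False
  then have "conv f A (sh k B) n = (\<Sum>i\<le>n. 0)"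
    unfolding conv_def sh_def by (intro sum.cong) (auto simp: z)
  then show ?thesis using False unfolding sh_def by simp
qed

lemma conv_sh1:
  assumes z: "\<And>b. f 0 b = 0"
  shows "conv f (sh k A) B n = sh k (conv f A B) n"
proof -
  have "conv f (sh k A) B n = conv (\<lambda>b a. f a b) B (sh k A) n" by (rule conv_swap)
  also have "\<dots> = sh k (conv (\<lambda>b a. f a b) B A) n" by (rule conv_sh2) (simp add: z)
  also have "conv (\<lambda>b a. f a b) B A = conv f A B" by (rule ext, rule conv_swap[symmetric])
  finally show ?thesis .
qed

lemma conv_add2:
  assumes a: "\<And>i. addf (f (A i))"
  shows "conv f A (\<lambda>m. B m + C m) n = conv f A B n + conv f A C n"
  unfolding conv_def by (simp add: addf_add[OF a] sum.distrib)

lemma conv_diff2: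
  assumes a: "\<And>i. addf (f (A i))"
  shows "conv f A (\<lambda>m. B m - C m) n = conv f A B n - conv f A C n"
  unfolding conv_def by (simp add: addf_diff[OF a] sum_subtractf)

lemma conv_add1:
  assumes a: "\<And>b. addf (\<lambda>a. f a b)"
  shows "conv f (\<lambda>m. A m + B m) C n = conv f A C n + conv f B C n"
  unfolding conv_def by (simp add: addf_add[OF a] sum.distrib)

lemma conv_diff1:
  assumes a: "\<And>b. addf (\<lambda>a. f a b)"
  shows "conv f (\<lambda>m. A m - B m) C n = conv f A C n - conv f B C n"
  unfolding conv_def by (simp add: addf_diff[OF a] sum_subtractf)

lemma conv_d0_2:
  assumes z: "\<And>b. f b 0 = 0"
  shows "conv f A (d0 a) n = f (A n) a"
proof -
  have "conv f A (d0 a) n = (\<Sum>i\<le>n. if i = n then f (A n) a else 0)"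
    unfolding conv_def d0_def by (rule sum.cong) (auto simp: z)
  then show ?thesis by simp
qed

lemma conv_d0_1:
  assumes z: "\<And>b. f 0 b = 0"
  shows "conv f (d0 a) B n = f a (B n)"
  using conv_swap[of f "d0 a" B n] conv_d0_2[of "\<lambda>b a. f a b" B a n] z by simp

lemma app_d0:
  assumes z: "\<And>i. F i 0 = 0"
  shows "app F (d0 a) n = F n a"
proof -
  have "app F (d0 a) n = (\<Sum>i\<le>n. if i = n then F n a else 0)"
    unfolding app_def conv_def d0_def by (rule sum.cong) (auto simp: z)
  then show ?thesis by simp
qed

lemma app_mcomp:
  assumes a: "\<And>i. addf (F i)"
  shows "app (mcomp F G) u n = app F (app G u) n"
proof -
  have "app (mcomp F G) u n = (\<Sum>j\<le>n. \<Sum>i\<le>j. F i (G (j - i) (u (n - j))))"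
    unfolding app_def conv_def mcomp_def by simp
  also have "\<dots> = (\<Sum>j\<le>n. \<Sum>i\<le>n - j. F j (G i (u (n - j - i))))"
    by (rule tri)
  also have "\<dots> = app F (app G u) n"
    unfolding app_def conv_def by (simp add: addf_sum[OF a])
  finally show ?thesis .
qed

lemma mcomp_assoc:
  assumes a: "\<And>i. addf (F i)"
  shows "mcomp (mcomp F G) H n x = mcomp F (mcomp G H) n x"
proof -
  have "mcomp (mcomp F G) H n x = (\<Sum>j\<le>n. \<Sum>i\<le>j. F i (G (j - i) (H (n - j) x)))"
    unfolding mcomp_def by simp
  also have "\<dots> = (\<Sum>j\<le>n. \<Sum>i\<le>n - j. F j (G i (H (n - j - i) x)))"
    by (rule tri)
  also have "\<dots> = mcomp F (mcomp G H) n x"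
    unfolding mcomp_def by (simp add: addf_sum[OF a])
  finally show ?thesis .
qed

lemma app_Aser:
  assumes k: "0 < k"
  shows "app (Aser k M) y n = y n + sh k (\<lambda>m. M (y m)) n"
proof -
  have "app (Aser k M) y n = (\<Sum>i\<le>n. (if i = 0 then y n else 0) + (if i = k then M (y (n - k)) else 0))"
    unfolding app_def conv_def Aser_def by (rule sum.cong) (use k in auto)
  then show ?thesis unfolding sh_def by (simp add: sum.distrib)
qed

lemma mcomp_Aser_left:
  assumes k: "0 < k"
  shows "mcomp (Aser k M) G n x = G n x + (if k \<le> n then M (G (n - k) x) else 0)"
proof -
  have "mcomp (Aser k M) G n x = (\<Sum>i\<le>n. (if i = 0 then G n x else 0) + (if i = k then M (G (n - k) x) else 0))"
    unfolding mcomp_def Aser_def by (rule sum.cong) (use k in auto)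
  then show ?thesis by (simp add: sum.distrib)
qed

lemma mcomp_Aser_right:
  assumes k: "0 < k" and z: "\<And>i. G i 0 = 0"
  shows "mcomp G (Aser k R) n u = G n u + (if k \<le> n then G (n - k) (R u) else 0)"
proof -
  have "mcomp G (Aser k R) n u = (\<Sum>i\<le>n. (if i = n then G n u else 0) + (if i = n - k \<and> k \<le> n then G (n - k) (R u) else 0))"
    unfolding mcomp_def Aser_def by (rule sum.cong) (use k z in auto)
  then show ?thesis by (simp add: sum.distrib)
qed

lemma app_idser: "app idser y n = y n"
proof -
  have "app idser y n = (\<Sum>i\<le>n. if i = 0 then y n else 0)"
    unfolding app_def conv_def idser_def by (rule sum.cong) auto
  then show ?thesis by simp
qed

lemma mcomp_idser_left: "mcomp idser G n x = G n x"
proof -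
  have "mcomp idser G n x = (\<Sum>i\<le>n. if i = 0 then G n x else 0)"
    unfolding mcomp_def idser_def by (rule sum.cong) auto
  then show ?thesis by simp
qed

lemma mcomp_idser_right:
  assumes z: "\<And>i. G i 0 = 0"
  shows "mcomp G idser n x = G n x"
proof -
  have "mcomp G idser n x = (\<Sum>i\<le>n. if i = n then G n x else 0)"
    unfolding mcomp_def idser_def by (rule sum.cong) (auto simp: z)
  then show ?thesis by simp
qed

lemma decomp: "(u::nat \<Rightarrow> 'a::monoid_add) = (\<lambda>n. d0 (u 0) n + sh 1 (\<lambda>m. u (Suc m)) n)"
  unfolding d0_def sh_def by (rule ext) (case_tac n, auto)


lemma app_addf:
  assumes a: "\<And>i. addf (F i)"
  shows "app F (\<lambda>m. u m + v m) = (\<lambda>m. app F u m + app F v m)"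
  unfolding app_def by (rule ext, rule conv_add2) (simp add: a)

lemma app_difff:
  assumes a: "\<And>i. addf (F i)"
  shows "app F (\<lambda>m. u m - v m) = (\<lambda>m. app F u m - app F v m)"
  unfolding app_def by (rule ext, rule conv_diff2) (simp add: a)

lemma app_shf:
  assumes a: "\<And>i. F i 0 = 0"
  shows "app F (sh k u) = sh k (app F u)"
  unfolding app_def by (rule ext, rule conv_sh2) (simp add: a)

lemma sh_diff: "sh k (\<lambda>m. X m - Y m) n = sh k X n - (sh k Y n :: 'a::ab_group_add)"
  unfolding sh_def by simp

lemma sh_add: "sh k (\<lambda>m. X m + Y m) n = sh k X n + (sh k Y n :: 'a::monoid_add)"
  unfolding sh_def by simp

lemma sh_cong: "(\<And>m. m < n \<Longrightarrow> X m = Y m) \<Longrightarrow> 0 < k \<Longrightarrow> sh k X n = sh k Y n"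
  unfolding sh_def by auto

lemma bi_induct:
  fixes E :: "(nat \<Rightarrow> 'a::monoid_add) \<Rightarrow> (nat \<Rightarrow> 'a) \<Rightarrow> nat \<Rightarrow> 'b::ab_group_add"
  assumes a1: "\<And>u u' v n. E (\<lambda>m. u m + u' m) v n = E u v n + E u' v n"
    and a2: "\<And>u v v' n. E u (\<lambda>m. v m + v' m) n = E u v n + E u v' n"
    and s1: "\<And>u v n. E (sh 1 u) v n = sh 1 (E u v) n"
    and s2: "\<And>u v n. E u (sh 1 v) n = sh 1 (E u v) n"
    and c: "\<And>a b n. E (d0 a) (d0 b) n = 0"
  shows "E u v n = 0"
proof (induct n arbitrary: u v rule: less_induct)
  case (less n)
  define u1 where "u1 = (\<lambda>m. u (Suc m))"
  define v1 where "v1 = (\<lambda>m. v (Suc m))"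
  have "E u v n = E (\<lambda>n. d0 (u 0) n + sh 1 u1 n) (\<lambda>n. d0 (v 0) n + sh 1 v1 n) n"
    unfolding u1_def v1_def by (rule arg_cong2[where f="\<lambda>a b. E a b n"]; rule decomp)
  also have "\<dots> = E (d0 (u 0)) (d0 (v 0)) n + E (d0 (u 0)) (sh 1 v1) n
      + (E (sh 1 u1) (d0 (v 0)) n + E (sh 1 u1) (sh 1 v1) n)"
    by (simp add: a1 a2)
  also have "\<dots> = 0 + sh 1 (E (d0 (u 0)) v1) n + (sh 1 (E u1 (d0 (v 0))) n + sh 1 (E (sh 1 u1) v1) n)"
    by (simp only: c s1 s2)
  also have "sh 1 (E (d0 (u 0)) v1) n = sh 1 (\<lambda>_. 0) n"
    by (rule sh_cong) (auto intro: less)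
  also have "sh 1 (E u1 (d0 (v 0))) n = sh 1 (\<lambda>_. 0) n"
    by (rule sh_cong) (auto intro: less)
  also have "sh 1 (E (sh 1 u1) v1) n = sh 1 (\<lambda>_. 0) n"
    by (rule sh_cong) (auto intro: less)
  finally show ?case unfolding sh_def by simp
qed


function solveM :: "nat \<Rightarrow> ('v \<Rightarrow> 'v) \<Rightarrow> (nat \<Rightarrow> 'v \<Rightarrow> 'g::ab_group_add) \<Rightarrow> nat \<Rightarrow> 'v \<Rightarrow> 'g" where
  "solveM k R C n = (if 0 < k \<and> k \<le> n then (\<lambda>u. C n u - solveM k R C (n - k) (R u)) else C n)"
  by pat_completeness auto
termination by (relation "measure (\<lambda>(k, R, C, n). n)") auto

declare solveM.simps[simp del]

function solveV :: "nat \<Rightarrow> ('v::ab_group_add \<Rightarrow> 'v) \<Rightarrow> (nat \<Rightarrow> 'v) \<Rightarrow> nat \<Rightarrow> 'v" where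
  "solveV k R w n = (if 0 < k \<and> k \<le> n then w n - R (solveV k R w (n - k)) else w n)"
  by pat_completeness auto
termination by (relation "measure (\<lambda>(k, R, w, n). n)") auto

declare solveV.simps[simp del]

lemma app_solveV:
  assumes k: "0 < k"
  shows "app (Aser k R) (solveV k R w) = w"
proof (rule ext)
  fix n
  show "app (Aser k R) (solveV k R w) n = w n"
    using solveV.simps[of k R w n] k unfolding app_Aser[OF k] sh_def by auto
qed

lemma scale_addf: "vector_space s \<Longrightarrow> addf (s c)"
  unfolding vector_space_def addf_def by blast

lemma lin_scale: "Vector_Spaces.linear s1 s2 f \<Longrightarrow> f (s1 c x) = s2 c (f x)"
  unfolding Vector_Spaces.linear_iff by blast

lemma mk_lin: "vector_space s1 \<Longrightarrow> vector_space s2 \<Longrightarrow> addf f \<Longrightarrow> (\<And>c x. f (s1 c x) = s2 c (f x))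
  \<Longrightarrow> Vector_Spaces.linear s1 s2 f"
  unfolding Vector_Spaces.linear_iff addf_def by blast

lemma addf_mcomp:
  assumes "\<And>i. addf (F i)" "\<And>i. addf (G i)"
  shows "addf (mcomp F G n)"
  unfolding addf_def mcomp_def by (simp add: addf_add[OF assms(1)] addf_add[OF assms(2)] sum.distrib)

lemma lin_mcomp:
  assumes v1: "vector_space s1" and v2: "vector_space s2" and v3: "vector_space s3"
    and F: "\<And>i. Vector_Spaces.linear s2 s3 (F i)" and G: "\<And>i. Vector_Spaces.linear s1 s2 (G i)"
  shows "Vector_Spaces.linear s1 s3 (mcomp F G n)"
proof (rule mk_lin[OF v1 v3])
  show "addf (mcomp F G n)" by (rule addf_mcomp) (auto intro: linear_addf F G)
  show "mcomp F G n (s1 c x) = s3 c (mcomp F G n x)" for c x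
    unfolding mcomp_def by (simp add: lin_scale[OF F] lin_scale[OF G] addf_sum[OF scale_addf[OF v3]])
qed

lemma lin_Aser:
  assumes v: "vector_space s" and M: "Vector_Spaces.linear s s M"
  shows "Vector_Spaces.linear s s (Aser k M i)"
proof (rule mk_lin[OF v v])
  show "addf (Aser k M i)" unfolding Aser_def addf_def using linear_addf[OF M] by (auto simp: addf_add)
  show "Aser k M i (s c x) = s c (Aser k M i x)" for c x
    unfolding Aser_def using lin_scale[OF M] addf_0[OF scale_addf[OF v]] by auto
qed

lemma lin_idser:
  assumes v: "vector_space s"
  shows "Vector_Spaces.linear s s (idser i)"
proof (rule mk_lin[OF v v])
  show "addf (idser i)" unfolding idser_def addf_def by auto
  show "idser i (s c x) = s c (idser i x)" for c x
    unfolding idser_def using addf_0[OF scale_addf[OF v]] by auto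
qed

lemma lin_solveM:
  assumes v1: "vector_space s1" and v2: "vector_space s2"
    and R: "Vector_Spaces.linear s1 s1 R" and C: "\<And>n. Vector_Spaces.linear s1 s2 (C n)"
  shows "Vector_Spaces.linear s1 s2 (solveM k R C n)"
proof (induct n rule: less_induct)
  case (less n)
  show ?case
  proof (cases "0 < k \<and> k \<le> n")
    case True
    then have IH: "Vector_Spaces.linear s1 s2 (solveM k R C (n - k))" by (intro less) auto
    have e: "solveM k R C n = (\<lambda>u. C n u - solveM k R C (n - k) (R u))"
      using True solveM.simps[of k R C n] by simp
    show ?thesis unfolding e
    proof (rule mk_lin[OF v1 v2])
      show "addf (\<lambda>u. C n u - solveM k R C (n - k) (R u))"
        unfolding addf_def using linear_addf[OF C] linear_addf[OF IH] linear_addf[OF R]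
        by (simp add: addf_add algebra_simps)
      show "C n (s1 c x) - solveM k R C (n - k) (R (s1 c x)) = s2 c (C n x - solveM k R C (n - k) (R x))" for c x
        using lin_scale[OF C] lin_scale[OF IH] lin_scale[OF R] addf_diff[OF scale_addf[OF v2]] by simp
    qed
  next
    case False
    have e: "solveM k R C n = C n" by (subst solveM.simps) (simp only: if_not_P[OF False])
    show ?thesis unfolding e by (rule C)
  qed
qed

lemma mcomp_solveM:
  assumes k: "0 < k" and z: "\<And>i. solveM k R C i 0 = 0"
  shows "mcomp (solveM k R C) (Aser k R) n u = C n u"
  unfolding mcomp_Aser_right[OF k, of "solveM k R C", OF z] using k solveM.simps[of k R C n] by auto

locale Ostr =
  fixes sg :: "'k::field \<Rightarrow> 'g \<Rightarrow> 'g::ab_group_add"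
    and br :: "'g \<Rightarrow> 'g \<Rightarrow> 'g"
    and sv :: "'k \<Rightarrow> 'v \<Rightarrow> 'v::ab_group_add"
    and \<rho> :: "'g \<Rightarrow> 'v \<Rightarrow> 'v"
    and T :: "'v \<Rightarrow> 'g"
  assumes O: "O_operator sg br sv \<rho> T"
begin

lemma rep: "lie_rep sg br sv \<rho>" using O unfolding O_operator_def by blast
lemma lie: "lie_algebra sg br" using rep unfolding lie_rep_def by blast
lemma T_lin: "Vector_Spaces.linear sv sg T" using O unfolding O_operator_def by blast
lemma T_add: "addf T" using T_lin by (rule linear_addf)
lemma T_O: "br (T u) (T v) = T (\<rho> (T u) v - \<rho> (T v) u)" using O unfolding O_operator_def by blast
lemma vsg: "vector_space sg" using lie unfolding lie_algebra_def by blast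
lemma vsv: "vector_space sv" using rep unfolding lie_rep_def by blast
lemma br_lin2: "Vector_Spaces.linear sg sg (br x)" using lie unfolding lie_algebra_def by blast
lemma br_lin1: "Vector_Spaces.linear sg sg (\<lambda>x. br x y)" using lie unfolding lie_algebra_def by blast
lemma rho_lin2: "Vector_Spaces.linear sv sv (\<rho> x)" using rep unfolding lie_rep_def by blast
lemma rho_lin1: "Vector_Spaces.linear sg sv (\<lambda>x. \<rho> x u)" using rep unfolding lie_rep_def by blast
lemma br_add2: "addf (br x)" using br_lin2 by (rule linear_addf)
lemma br_add1: "addf (\<lambda>x. br x y)" using br_lin1 by (rule linear_addf)
lemma rho_add2: "addf (\<rho> x)" using rho_lin2 by (rule linear_addf)
lemma rho_add1: "addf (\<lambda>x. \<rho> x u)" using rho_lin1 by (rule linear_addf)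
lemma br_0_1[simp]: "br 0 y = 0" using addf_0[OF br_add1] by simp
lemma br_0_2[simp]: "br x 0 = 0" using addf_0[OF br_add2] by simp
lemma rho_0_1[simp]: "\<rho> 0 u = 0" using addf_0[OF rho_add1] by simp
lemma rho_0_2[simp]: "\<rho> x 0 = 0" using addf_0[OF rho_add2] by simp
lemma T_0[simp]: "T 0 = 0" using addf_0[OF T_add] .
lemma br_xx: "br x x = 0" using lie unfolding lie_algebra_def by blast
lemma jac: "br x (br y z) + br y (br z x) + br z (br x y) = 0" using lie unfolding lie_algebra_def by blast
lemma rho_br: "\<rho> (br x y) u = \<rho> x (\<rho> y u) - \<rho> y (\<rho> x u)" using rep unfolding lie_rep_def by blast

lemma rho_br': "\<rho> x (\<rho> y u) = \<rho> (br x y) u + \<rho> y (\<rho> x u)"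
  by (simp add: rho_br)

lemma anti: "br x y = - br y x"
proof -
  have "0 = br (x + y) (x + y)" by (simp add: br_xx)
  also have "\<dots> = br x x + br x y + (br y x + br y y)"
    using addf_add[OF br_add1, of x y "x + y"] addf_add[OF br_add2, of x x y] addf_add[OF br_add2, of y x y]
    by simp
  finally have "br x y + br y x = 0" by (simp add: br_xx)
  then show ?thesis by (simp add: eq_neg_iff_add_eq_0)
qed

lemma der: "br a (br y z) = br (br a y) z + br y (br a z)"
proof -
  have "br a (br y z) = - br y (br z a) - br z (br a y)" using jac[of a y z] by (simp add: algebra_simps eq_neg_iff_add_eq_0)
  also have "br y (br z a) = - br y (br a z)" using anti[of z a] addf_minus[OF br_add2, of y "br a z"] by simp
  also have "br z (br a y) = - br (br a y) z" by (rule anti)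
  finally show ?thesis by simp
qed


lemma brL: "conv br (\<lambda>m. X m + Y m) Z = (\<lambda>m. conv br X Z m + conv br Y Z m)"
  by (rule ext, rule conv_add1) (rule br_add1)
lemma brR: "conv br X (\<lambda>m. Y m + Z m) = (\<lambda>m. conv br X Y m + conv br X Z m)"
  by (rule ext, rule conv_add2) (rule br_add2)
lemma rhL: "conv \<rho> (\<lambda>m. X m + Y m) Z = (\<lambda>m. conv \<rho> X Z m + conv \<rho> Y Z m)"
  by (rule ext, rule conv_add1) (rule rho_add1)
lemma rhR: "conv \<rho> X (\<lambda>m. Y m + Z m) = (\<lambda>m. conv \<rho> X Y m + conv \<rho> X Z m)"
  by (rule ext, rule conv_add2) (rule rho_add2)
lemma brLd: "conv br (\<lambda>m. X m - Y m) Z = (\<lambda>m. conv br X Z m - conv br Y Z m)"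
  by (rule ext, rule conv_diff1) (rule br_add1)
lemma brRd: "conv br X (\<lambda>m. Y m - Z m) = (\<lambda>m. conv br X Y m - conv br X Z m)"
  by (rule ext, rule conv_diff2) (rule br_add2)
lemma rhLd: "conv \<rho> (\<lambda>m. X m - Y m) Z = (\<lambda>m. conv \<rho> X Z m - conv \<rho> Y Z m)"
  by (rule ext, rule conv_diff1) (rule rho_add1)
lemma rhRd: "conv \<rho> X (\<lambda>m. Y m - Z m) = (\<lambda>m. conv \<rho> X Y m - conv \<rho> X Z m)"
  by (rule ext, rule conv_diff2) (rule rho_add2)
lemma brLs: "conv br (sh k X) Z = sh k (conv br X Z)"
  by (rule ext, rule conv_sh1) simp
lemma brRs: "conv br X (sh k Z) = sh k (conv br X Z)"
  by (rule ext, rule conv_sh2) simp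
lemma rhLs: "conv \<rho> (sh k X) Z = sh k (conv \<rho> X Z)"
  by (rule ext, rule conv_sh1) simp
lemma rhRs: "conv \<rho> X (sh k Z) = sh k (conv \<rho> X Z)"
  by (rule ext, rule conv_sh2) simp

definition Def :: "(nat \<Rightarrow> 'v \<Rightarrow> 'g) \<Rightarrow> bool" where
  "Def \<sigma> \<longleftrightarrow> (\<forall>u v n. conv br (app \<sigma> u) (app \<sigma> v) n
      = app \<sigma> (\<lambda>m. conv \<rho> (app \<sigma> u) v m - conv \<rho> (app \<sigma> v) u m) n)"

lemma def_from_const:
  assumes a: "\<And>i. addf (\<sigma> i)"
    and c: "\<And>n a b. (\<Sum>i\<le>n. br (\<sigma> i a) (\<sigma> (n - i) b))
        = (\<Sum>i\<le>n. \<sigma> i (\<rho> (\<sigma> (n - i) a) b - \<rho> (\<sigma> (n - i) b) a))"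
  shows "Def \<sigma>"
proof -
  have z: "\<And>i. \<sigma> i 0 = 0" using addf_0[OF a] .
  define W where "W = (\<lambda>u v m. conv \<rho> (app \<sigma> u) v m - conv \<rho> (app \<sigma> v) u m)"
  define E where "E = (\<lambda>u v n. conv br (app \<sigma> u) (app \<sigma> v) n - app \<sigma> (W u v) n)"
  have Aa: "\<And>u u'. app \<sigma> (\<lambda>m. u m + u' m) = (\<lambda>m. app \<sigma> u m + app \<sigma> u' m)"
    by (rule app_addf[OF a])
  have Ad: "\<And>u u'. app \<sigma> (\<lambda>m. u m - u' m) = (\<lambda>m. app \<sigma> u m - app \<sigma> u' m)"
    by (rule app_difff[OF a])
  have As: "\<And>u. app \<sigma> (sh 1 u) = sh 1 (app \<sigma> u)"
    by (rule app_shf) (rule z)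
  have W1: "W (\<lambda>m. u m + u' m) v = (\<lambda>m. W u v m + W u' v m)" for u u' v
    unfolding W_def by (rule ext) (simp add: Aa rhL rhR algebra_simps)
  have W2: "W u (\<lambda>m. v m + v' m) = (\<lambda>m. W u v m + W u v' m)" for u v v'
    unfolding W_def by (rule ext) (simp add: Aa rhL rhR algebra_simps)
  have Ws1: "W (sh 1 u) v = sh 1 (W u v)" for u v
    unfolding W_def by (rule ext) (simp only: As rhLs rhRs sh_diff)
  have Ws2: "W u (sh 1 v) = sh 1 (W u v)" for u v
    unfolding W_def by (rule ext) (simp only: As rhLs rhRs sh_diff)
  have "E u v n = 0" for u v n
  proof (rule bi_induct[of E])
    show "E (\<lambda>m. u m + u' m) v n = E u v n + E u' v n" for u u' v n
      unfolding E_def by (simp add: W1 Aa brL)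
    show "E u (\<lambda>m. v m + v' m) n = E u v n + E u v' n" for u v v' n
      unfolding E_def by (simp add: W2 Aa brR)
    show "E (sh 1 u) v n = sh 1 (E u v) n" for u v n
      unfolding E_def by (simp only: Ws1 As brLs sh_diff)
    show "E u (sh 1 v) n = sh 1 (E u v) n" for u v n
      unfolding E_def by (simp only: Ws2 As brRs sh_diff)
    show "E (d0 a) (d0 b) n = 0" for a b n
    proof -
      have ad: "app \<sigma> (d0 a) = (\<lambda>m. \<sigma> m a)" for a
        by (rule ext, rule app_d0) (rule z)
      have rd: "conv \<rho> X (d0 a) = (\<lambda>m. \<rho> (X m) a)" for X a
        by (rule ext, rule conv_d0_2) simp
      show ?thesis unfolding E_def W_def ad rd
        unfolding conv_def app_def by (simp add: c)
    qed
  qed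
  then show ?thesis unfolding Def_def E_def W_def by simp
qed


definition Aut :: "(nat \<Rightarrow> 'g \<Rightarrow> 'g) \<Rightarrow> bool" where
  "Aut P \<longleftrightarrow> (\<forall>y z n. conv br (app P y) (app P z) n = app P (conv br y z) n)"

definition Comp :: "(nat \<Rightarrow> 'g \<Rightarrow> 'g) \<Rightarrow> (nat \<Rightarrow> 'v \<Rightarrow> 'v) \<Rightarrow> bool" where
  "Comp P Q \<longleftrightarrow> (\<forall>y u n. app Q (conv \<rho> y u) n = conv \<rho> (app P y) (app Q u) n)"

lemma app_idser_f: "app idser y = y" by (rule ext, rule app_idser)

lemma Aut_id: "Aut idser" unfolding Aut_def app_idser_f by simp
lemma Comp_id: "Comp idser idser" unfolding Comp_def app_idser_f by simp

lemma Aut_comp: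
  assumes A: "Aut A" and P: "Aut P" and aa: "\<And>i. addf (A i)" and pa: "\<And>i. addf (P i)"
  shows "Aut (mcomp A P)"
proof -
  have e: "app (mcomp A P) y = app A (app P y)" for y by (rule ext, rule app_mcomp[OF aa])
  have p: "conv br (app P y) (app P z) = app P (conv br y z)" for y z
    using P unfolding Aut_def by blast
  show ?thesis unfolding Aut_def e using A unfolding Aut_def p[symmetric] by blast
qed

lemma Comp_comp:
  assumes AB: "Comp A B" and PQ: "Comp P Q" and aa: "\<And>i. addf (A i)" and ba: "\<And>i. addf (B i)"
  shows "Comp (mcomp A P) (mcomp B Q)"
proof -
  have e: "app (mcomp A P) y = app A (app P y)" for y by (rule ext, rule app_mcomp[OF aa])
  have f: "app (mcomp B Q) y = app B (app Q y)" for y by (rule ext, rule app_mcomp[OF ba])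
  have p: "app Q (conv \<rho> y u) = conv \<rho> (app P y) (app Q u)" for y u
    using PQ unfolding Comp_def by blast
  show ?thesis unfolding Comp_def e f p using AB unfolding Comp_def by blast
qed

lemma Aut_A:
  assumes a: "a \<in> Nij br \<rho> T" and k: "0 < k"
  shows "Aut (Aser k (br a))"
proof -
  have nij1: "br (br a y) (br a z) = 0" for y z using a unfolding Nij_def by blast
  have AA: "app (Aser k (br a)) y = (\<lambda>n. y n + sh k (\<lambda>m. br a (y m)) n)" for y
    by (rule ext, rule app_Aser[OF k])
  have zero: "conv br (\<lambda>m. br a (y m)) (\<lambda>m. br a (z m)) = (\<lambda>_. 0)" for y z
    unfolding conv_def by (simp add: nij1)
  have dd: "br a (conv br y z n) = conv br (\<lambda>m. br a (y m)) z n + conv br y (\<lambda>m. br a (z m)) n" for y z n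
    unfolding conv_def by (simp add: addf_sum[OF br_add2] der[of a] sum.distrib)
  show ?thesis unfolding Aut_def
  proof (intro allI)
    fix y z n
    show "conv br (app (Aser k (br a)) y) (app (Aser k (br a)) z) n = app (Aser k (br a)) (conv br y z) n"
      unfolding AA brL brR brLs brRs zero by (simp add: dd sh_def)
  qed
qed

lemma Comp_AB:
  assumes a: "a \<in> Nij br \<rho> T" and k: "0 < k"
  shows "Comp (Aser k (br a)) (Aser k (\<rho> a))"
proof -
  have nij2: "\<rho> (br a y) (\<rho> a u) = 0" for y u using a unfolding Nij_def by blast
  have AA: "app (Aser k (br a)) y = (\<lambda>n. y n + sh k (\<lambda>m. br a (y m)) n)" for y
    by (rule ext, rule app_Aser[OF k])
  have BB: "app (Aser k (\<rho> a)) y = (\<lambda>n. y n + sh k (\<lambda>m. \<rho> a (y m)) n)" for y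
    by (rule ext, rule app_Aser[OF k])
  have zero: "conv \<rho> (\<lambda>m. br a (y m)) (\<lambda>m. \<rho> a (u m)) = (\<lambda>_. 0)" for y u
    unfolding conv_def by (simp add: nij2)
  have dd: "\<rho> a (conv \<rho> y u n) = conv \<rho> (\<lambda>m. br a (y m)) u n + conv \<rho> y (\<lambda>m. \<rho> a (u m)) n" for y u n
    unfolding conv_def by (simp add: addf_sum[OF rho_add2] rho_br'[of a] sum.distrib)
  show ?thesis unfolding Comp_def
  proof (intro allI)
    fix y u n
    show "app (Aser k (\<rho> a)) (conv \<rho> y u) n = conv \<rho> (app (Aser k (br a)) y) (app (Aser k (\<rho> a)) u) n"
      unfolding AA BB rhL rhR rhLs rhRs zero by (simp add: dd sh_def)
  qed
qed

lemma sig_Z1: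
  assumes D: "Def \<sigma>" and L: "\<And>i. Vector_Spaces.linear sv sg (\<sigma> i)" and s0: "\<sigma> 0 = T"
    and zs: "\<And>j u. 1 \<le> j \<Longrightarrow> j < K \<Longrightarrow> \<sigma> j u = 0" and K: "0 < K"
  shows "\<sigma> K \<in> Z1 sg br sv \<rho> T"
proof -
  have sa: "\<And>i. addf (\<sigma> i)" using L by (rule linear_addf)
  have z: "\<sigma> i 0 = 0" for i using addf_0[OF sa] .
  have ad: "app \<sigma> (d0 a) = (\<lambda>m. \<sigma> m a)" for a
    by (rule ext, rule app_d0) (rule z)
  have rd: "conv \<rho> X (d0 a) = (\<lambda>m. \<rho> (X m) a)" for X a
    by (rule ext, rule conv_d0_2) simp
  have eq: "(\<Sum>i\<le>K. br (\<sigma> i a) (\<sigma> (K - i) b)) = (\<Sum>i\<le>K. \<sigma> i (\<rho> (\<sigma> (K - i) a) b - \<rho> (\<sigma> (K - i) b) a))" for a b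
  proof -
    have "conv br (app \<sigma> (d0 a)) (app \<sigma> (d0 b)) K = app \<sigma> (\<lambda>m. conv \<rho> (app \<sigma> (d0 a)) (d0 b) m - conv \<rho> (app \<sigma> (d0 b)) (d0 a) m) K"
      using D unfolding Def_def by blast
    then show ?thesis unfolding ad rd unfolding conv_def app_def by simp
  qed
  have l: "(\<Sum>i\<le>K. br (\<sigma> i a) (\<sigma> (K - i) b)) = (\<Sum>i\<le>K. (if i = 0 then br (T a) (\<sigma> K b) else 0) + (if i = K then br (\<sigma> K a) (T b) else 0))" for a b
  proof (rule sum.cong)
    fix i assume "i \<in> {..K}"
    then show "br (\<sigma> i a) (\<sigma> (K - i) b) = (if i = 0 then br (T a) (\<sigma> K b) else 0) + (if i = K then br (\<sigma> K a) (T b) else 0)"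
      using K s0 zs[of i a] by auto
  qed simp
  have r: "(\<Sum>i\<le>K. \<sigma> i (\<rho> (\<sigma> (K - i) a) b - \<rho> (\<sigma> (K - i) b) a)) = (\<Sum>i\<le>K. (if i = 0 then T (\<rho> (\<sigma> K a) b - \<rho> (\<sigma> K b) a) else 0) + (if i = K then \<sigma> K (\<rho> (T a) b - \<rho> (T b) a) else 0))" for a b
  proof (rule sum.cong)
    fix i assume "i \<in> {..K}"
    then show "\<sigma> i (\<rho> (\<sigma> (K - i) a) b - \<rho> (\<sigma> (K - i) b) a) = (if i = 0 then T (\<rho> (\<sigma> K a) b - \<rho> (\<sigma> K b) a) else 0) + (if i = K then \<sigma> K (\<rho> (T a) b - \<rho> (T b) a) else 0)"
      using K s0 zs[of i] by auto
  qed simp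
  have main: "br (T a) (\<sigma> K b) + br (\<sigma> K a) (T b) = T (\<rho> (\<sigma> K a) b - \<rho> (\<sigma> K b) a) + \<sigma> K (\<rho> (T a) b - \<rho> (T b) a)" for a b
    using eq[of a b] unfolding l r using K by (simp add: sum.distrib)
  show ?thesis unfolding Z1_def
  proof (intro CollectI conjI allI)
    show "Vector_Spaces.linear sv sg (\<sigma> K)" by (rule L)
    fix u v
    show "br (T u) (\<sigma> K v) - br (T v) (\<sigma> K u) - T (\<rho> (\<sigma> K u) v - \<rho> (\<sigma> K v) u) - \<sigma> K (\<rho> (T u) v - \<rho> (T v) u) = 0"
      using main[of u v] anti[of "T v" "\<sigma> K u"] by (simp add: algebra_simps)
  qed
qed


lemma step:
  assumes D: "Def \<sigma>" and L: "\<And>i. Vector_Spaces.linear sv sg (\<sigma> i)" and s0: "\<sigma> 0 = T"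
    and zs: "\<And>j u. 1 \<le> j \<Longrightarrow> j < K \<Longrightarrow> \<sigma> j u = 0" and K: "0 < K"
    and a: "a \<in> Nij br \<rho> T" and da: "d_rhobar br \<rho> T a = \<sigma> K"
  shows "Def (solveM K (\<rho> a) (mcomp (Aser K (br a)) \<sigma>))
    \<and> (\<forall>i. Vector_Spaces.linear sv sg (solveM K (\<rho> a) (mcomp (Aser K (br a)) \<sigma>) i))
    \<and> solveM K (\<rho> a) (mcomp (Aser K (br a)) \<sigma>) 0 = T
    \<and> (\<forall>j u. 1 \<le> j \<longrightarrow> j \<le> K \<longrightarrow> solveM K (\<rho> a) (mcomp (Aser K (br a)) \<sigma>) j u = 0)
    \<and> (\<forall>n u. mcomp (solveM K (\<rho> a) (mcomp (Aser K (br a)) \<sigma>)) (Aser K (\<rho> a)) n u = mcomp (Aser K (br a)) \<sigma> n u)"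
proof -
  define A where "A = Aser K (br a)"
  define B where "B = Aser K (\<rho> a)"
  define C where "C = mcomp A \<sigma>"
  define \<sigma>' where "\<sigma>' = solveM K (\<rho> a) C"
  have AL: "Vector_Spaces.linear sg sg (A i)" for i unfolding A_def by (rule lin_Aser[OF vsg br_lin2])
  have BL: "Vector_Spaces.linear sv sv (B i)" for i unfolding B_def by (rule lin_Aser[OF vsv rho_lin2])
  have Aa: "addf (A i)" for i by (rule linear_addf[OF AL])
  have Ba: "addf (B i)" for i by (rule linear_addf[OF BL])
  have sa: "addf (\<sigma> i)" for i by (rule linear_addf[OF L])
  have CL: "Vector_Spaces.linear sv sg (C n)" for n unfolding C_def by (rule lin_mcomp[OF vsv vsg vsg AL L])
  have SL: "Vector_Spaces.linear sv sg (\<sigma>' n)" for n unfolding \<sigma>'_def by (rule lin_solveM[OF vsv vsg rho_lin2 CL])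
  have Sa: "addf (\<sigma>' i)" for i by (rule linear_addf[OF SL])
  have Sz: "\<sigma>' i 0 = 0" for i by (rule addf_0[OF Sa])
  have MB: "mcomp \<sigma>' B n u = C n u" for n u
    unfolding \<sigma>'_def B_def by (rule mcomp_solveM[OF K]) (use Sz in \<open>simp add: \<sigma>'_def\<close>)
  have MBf: "mcomp \<sigma>' B = C" using MB by (intro ext)
  have key: "app \<sigma>' (app B X) = app A (app \<sigma> X)" for X
  proof -
    have "app \<sigma>' (app B X) = app (mcomp \<sigma>' B) X" by (rule ext, rule app_mcomp[OF Sa, symmetric])
    also have "\<dots> = app C X" unfolding MBf ..
    also have "\<dots> = app A (app \<sigma> X)" unfolding C_def by (rule ext, rule app_mcomp[OF Aa])
    finally show ?thesis .
  qed
  have sur: "app B (solveV K (\<rho> a) w) = w" for w unfolding B_def by (rule app_solveV[OF K])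
  have AutA: "Aut A" unfolding A_def by (rule Aut_A[OF a K])
  have CompAB: "Comp A B" unfolding A_def B_def by (rule Comp_AB[OF a K])
  have Def': "Def \<sigma>'"
    unfolding Def_def
  proof (intro allI)
    fix u v n
    define u' where "u' = solveV K (\<rho> a) u"
    define v' where "v' = solveV K (\<rho> a) v"
    have eu: "app \<sigma>' u = app A (app \<sigma> u')" using key[of u'] sur unfolding u'_def by simp
    have ev: "app \<sigma>' v = app A (app \<sigma> v')" using key[of v'] sur unfolding v'_def by simp
    define W where "W = (\<lambda>m. conv \<rho> (app \<sigma> u') v' m - conv \<rho> (app \<sigma> v') u' m)"
    have DW: "conv br (app \<sigma> u') (app \<sigma> v') = app \<sigma> W"
      using D unfolding Def_def W_def by (intro ext) blast
    have BW: "app B W = (\<lambda>m. conv \<rho> (app \<sigma>' u) v m - conv \<rho> (app \<sigma>' v) u m)"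
    proof -
      have "app B W = (\<lambda>m. app B (conv \<rho> (app \<sigma> u') v') m - app B (conv \<rho> (app \<sigma> v') u') m)"
        unfolding W_def by (rule app_difff[OF Ba])
      also have "\<dots> = (\<lambda>m. conv \<rho> (app A (app \<sigma> u')) (app B v') m - conv \<rho> (app A (app \<sigma> v')) (app B u') m)"
        using CompAB unfolding Comp_def by simp
      also have "\<dots> = (\<lambda>m. conv \<rho> (app \<sigma>' u) v m - conv \<rho> (app \<sigma>' v) u m)"
        unfolding eu ev u'_def v'_def sur ..
      finally show ?thesis .
    qed
    have "conv br (app \<sigma>' u) (app \<sigma>' v) n = conv br (app A (app \<sigma> u')) (app A (app \<sigma> v')) n"
      unfolding eu ev ..
    also have "\<dots> = app A (conv br (app \<sigma> u') (app \<sigma> v')) n"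
      using AutA unfolding Aut_def by blast
    also have "\<dots> = app A (app \<sigma> W) n" unfolding DW ..
    also have "\<dots> = app \<sigma>' (app B W) n" unfolding key ..
    also have "\<dots> = app \<sigma>' (\<lambda>m. conv \<rho> (app \<sigma>' u) v m - conv \<rho> (app \<sigma>' v) u m) n"
      unfolding BW ..
    finally show "conv br (app \<sigma>' u) (app \<sigma>' v) n = app \<sigma>' (\<lambda>m. conv \<rho> (app \<sigma>' u) v m - conv \<rho> (app \<sigma>' v) u m) n" .
  qed
  have Clow: "C j u = \<sigma> j u" if "j < K" for j u
    unfolding C_def A_def using mcomp_Aser_left[OF K, of "br a" \<sigma> j u] that by simp
  have Slow: "\<sigma>' j = C j" if "j < K" for j
    unfolding \<sigma>'_def using solveM.simps[of K "\<rho> a" C j] that by simp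
  have S0: "\<sigma>' 0 = T" using Slow[of 0] Clow[of 0] K s0 by (intro ext) simp
  have SK: "\<sigma>' K u = 0" for u
  proof -
    have "\<sigma>' K u = C K u - \<sigma>' 0 (\<rho> a u)"
      unfolding \<sigma>'_def using solveM.simps[of K "\<rho> a" C K] K by simp
    also have "C K u = \<sigma> K u + br a (\<sigma> 0 u)"
      unfolding C_def A_def using mcomp_Aser_left[OF K, of "br a" \<sigma> K u] by simp
    also have "\<sigma> K u = br (T u) a + T (\<rho> a u)" using da[symmetric] unfolding d_rhobar_def by simp
    finally show ?thesis using S0 s0 anti[of a "T u"] by simp
  qed
  have Sz2: "\<forall>j u. 1 \<le> j \<longrightarrow> j \<le> K \<longrightarrow> \<sigma>' j u = 0"
  proof (intro allI impI)
    fix j u assume j: "1 \<le> j" "j \<le> K"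
    show "\<sigma>' j u = 0"
    proof (cases "j = K")
      case True then show ?thesis using SK by simp
    next
      case False then have "j < K" using j by simp
      then show ?thesis using Slow Clow zs j by simp
    qed
  qed
  show ?thesis
    using Def' SL S0 Sz2 MB unfolding \<sigma>'_def C_def A_def B_def by blast
qed

end


locale Rig = Ostr sg br sv \<rho> T
  for sg :: "'k::field \<Rightarrow> 'g \<Rightarrow> 'g::ab_group_add"
    and br :: "'g \<Rightarrow> 'g \<Rightarrow> 'g"
    and sv :: "'k \<Rightarrow> 'v \<Rightarrow> 'v::ab_group_add"
    and \<rho> :: "'g \<Rightarrow> 'v \<Rightarrow> 'v"
    and T :: "'v \<Rightarrow> 'g" +
  fixes \<tau> :: "nat \<Rightarrow> 'v \<Rightarrow> 'g"
  assumes Z: "Z1 sg br sv \<rho> T = d_rhobar br \<rho> T ` Nij br \<rho> T"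
    and fd: "formal_deformation sg br sv \<rho> T \<tau>"
begin

definition pick :: "(nat \<Rightarrow> 'v \<Rightarrow> 'g) \<Rightarrow> nat \<Rightarrow> 'g" where
  "pick \<sigma> K = (SOME a. a \<in> Nij br \<rho> T \<and> d_rhobar br \<rho> T a = \<sigma> K)"

primrec stage :: "nat \<Rightarrow> (nat \<Rightarrow> 'v \<Rightarrow> 'g) \<times> (nat \<Rightarrow> 'g \<Rightarrow> 'g) \<times> (nat \<Rightarrow> 'v \<Rightarrow> 'v)" where
  "stage 0 = (\<tau>, idser, idser)"
| "stage (Suc k) = (let a = pick (fst (stage k)) (Suc k) in
     (solveM (Suc k) (\<rho> a) (mcomp (Aser (Suc k) (br a)) (fst (stage k))),
      mcomp (Aser (Suc k) (br a)) (fst (snd (stage k))),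
      mcomp (Aser (Suc k) (\<rho> a)) (snd (snd (stage k)))))"

definition "SG k = fst (stage k)"
definition "PP k = fst (snd (stage k))"
definition "QQ k = snd (snd (stage k))"

lemma SG0: "SG 0 = \<tau>" and PP0: "PP 0 = idser" and QQ0: "QQ 0 = idser"
  unfolding SG_def PP_def QQ_def by simp_all

lemma SGS: "SG (Suc k) = solveM (Suc k) (\<rho> (pick (SG k) (Suc k))) (mcomp (Aser (Suc k) (br (pick (SG k) (Suc k)))) (SG k))"
  and PPS: "PP (Suc k) = mcomp (Aser (Suc k) (br (pick (SG k) (Suc k)))) (PP k)"
  and QQS: "QQ (Suc k) = mcomp (Aser (Suc k) (\<rho> (pick (SG k) (Suc k)))) (QQ k)"
  unfolding SG_def PP_def QQ_def by (simp_all add: Let_def)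

definition Inv :: "nat \<Rightarrow> bool" where
  "Inv k \<longleftrightarrow> Def (SG k) \<and> (\<forall>i. Vector_Spaces.linear sv sg (SG k i)) \<and> SG k 0 = T
     \<and> (\<forall>j u. 1 \<le> j \<longrightarrow> j \<le> k \<longrightarrow> SG k j u = 0)
     \<and> (\<forall>i. Vector_Spaces.linear sg sg (PP k i)) \<and> (\<forall>i. Vector_Spaces.linear sv sv (QQ k i))
     \<and> Aut (PP k) \<and> Comp (PP k) (QQ k)
     \<and> (\<forall>n u. mcomp (SG k) (QQ k) n u = mcomp (PP k) \<tau> n u)"

lemma tau_lin: "Vector_Spaces.linear sv sg (\<tau> i)" using fd unfolding formal_deformation_def by blast
lemma tau0: "\<tau> 0 = T" using fd unfolding formal_deformation_def by blast
lemma tau_eq: "(\<Sum>i\<le>n. br (\<tau> i u) (\<tau> (n - i) v)) = (\<Sum>i\<le>n. \<tau> i (\<rho> (\<tau> (n - i) u) v - \<rho> (\<tau> (n - i) v) u))"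
  using fd unfolding formal_deformation_def by blast

lemma Inv0: "Inv 0"
proof -
  have ta: "addf (\<tau> i)" for i by (rule linear_addf[OF tau_lin])
  have D: "Def \<tau>" by (rule def_from_const[OF ta tau_eq])
  have m1: "mcomp \<tau> idser n u = \<tau> n u" for n u by (rule mcomp_idser_right) (rule addf_0[OF ta])
  have m2: "mcomp idser \<tau> n u = \<tau> n u" for n u by (rule mcomp_idser_left)
  show ?thesis unfolding Inv_def SG0 PP0 QQ0
    using D tau_lin tau0 lin_idser[OF vsg] lin_idser[OF vsv] Aut_id Comp_id m1 m2 by simp
qed

lemma InvS:
  assumes I: "Inv k"
  shows "Inv (Suc k)"
proof -
  define K where "K = Suc k"
  define \<sigma> where "\<sigma> = SG k"
  define P where "P = PP k"
  define Q where "Q = QQ k"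
  have D: "Def \<sigma>" and L: "\<And>i. Vector_Spaces.linear sv sg (\<sigma> i)" and s0: "\<sigma> 0 = T"
    and zs0: "\<And>j u. 1 \<le> j \<Longrightarrow> j \<le> k \<Longrightarrow> \<sigma> j u = 0"
    and PL: "\<And>i. Vector_Spaces.linear sg sg (P i)" and QL: "\<And>i. Vector_Spaces.linear sv sv (Q i)"
    and AP: "Aut P" and CPQ: "Comp P Q" and I7: "\<And>n u. mcomp \<sigma> Q n u = mcomp P \<tau> n u"
    using I unfolding Inv_def \<sigma>_def P_def Q_def by blast+
  have K: "0 < K" unfolding K_def by simp
  have zs: "\<And>j u. 1 \<le> j \<Longrightarrow> j < K \<Longrightarrow> \<sigma> j u = 0" using zs0 unfolding K_def by simp
  have "\<sigma> K \<in> Z1 sg br sv \<rho> T" by (rule sig_Z1[OF D L s0 zs K])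
  then have "\<sigma> K \<in> d_rhobar br \<rho> T ` Nij br \<rho> T" by (simp only: Z)
  then obtain a0 where a0: "a0 \<in> Nij br \<rho> T" and ea0: "\<sigma> K = d_rhobar br \<rho> T a0" by (rule imageE)
  then have "\<exists>a. a \<in> Nij br \<rho> T \<and> d_rhobar br \<rho> T a = \<sigma> K" by (intro exI[of _ a0]) simp
  then have pa: "pick \<sigma> K \<in> Nij br \<rho> T \<and> d_rhobar br \<rho> T (pick \<sigma> K) = \<sigma> K"
    unfolding pick_def by (rule someI_ex)
  define a where "a = pick \<sigma> K"
  have a: "a \<in> Nij br \<rho> T" and da: "d_rhobar br \<rho> T a = \<sigma> K" using pa unfolding a_def by blast+
  define A where "A = Aser K (br a)"
  define B where "B = Aser K (\<rho> a)"
  have st: "Def (solveM K (\<rho> a) (mcomp A \<sigma>))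
    \<and> (\<forall>i. Vector_Spaces.linear sv sg (solveM K (\<rho> a) (mcomp A \<sigma>) i))
    \<and> solveM K (\<rho> a) (mcomp A \<sigma>) 0 = T
    \<and> (\<forall>j u. 1 \<le> j \<longrightarrow> j \<le> K \<longrightarrow> solveM K (\<rho> a) (mcomp A \<sigma>) j u = 0)
    \<and> (\<forall>n u. mcomp (solveM K (\<rho> a) (mcomp A \<sigma>)) B n u = mcomp A \<sigma> n u)"
    unfolding A_def B_def by (rule step[OF D L s0 zs K a da])
  have e1: "SG (Suc k) = solveM K (\<rho> a) (mcomp A \<sigma>)"
    unfolding SGS A_def a_def K_def \<sigma>_def ..
  have e2: "PP (Suc k) = mcomp A P" unfolding PPS A_def a_def K_def \<sigma>_def P_def ..
  have e3: "QQ (Suc k) = mcomp B Q" unfolding QQS B_def a_def K_def \<sigma>_def Q_def ..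
  define \<sigma>' where "\<sigma>' = solveM K (\<rho> a) (mcomp A \<sigma>)"
  have AL: "Vector_Spaces.linear sg sg (A i)" for i unfolding A_def by (rule lin_Aser[OF vsg br_lin2])
  have BL: "Vector_Spaces.linear sv sv (B i)" for i unfolding B_def by (rule lin_Aser[OF vsv rho_lin2])
  have Aa: "addf (A i)" for i by (rule linear_addf[OF AL])
  have Ba: "addf (B i)" for i by (rule linear_addf[OF BL])
  have Pa: "addf (P i)" for i by (rule linear_addf[OF PL])
  have Sa: "addf (\<sigma>' i)" for i using st unfolding \<sigma>'_def by (blast intro: linear_addf)
  have MB: "mcomp \<sigma>' B = mcomp A \<sigma>" using st unfolding \<sigma>'_def by (intro ext) blast
  have I7f: "mcomp \<sigma> Q = mcomp P \<tau>" using I7 by (intro ext)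
  have I7': "mcomp \<sigma>' (mcomp B Q) n u = mcomp (mcomp A P) \<tau> n u" for n u
  proof -
    have "mcomp \<sigma>' (mcomp B Q) n u = mcomp (mcomp \<sigma>' B) Q n u" by (rule mcomp_assoc[OF Sa, symmetric])
    also have "\<dots> = mcomp (mcomp A \<sigma>) Q n u" unfolding MB ..
    also have "\<dots> = mcomp A (mcomp \<sigma> Q) n u" by (rule mcomp_assoc[OF Aa])
    also have "\<dots> = mcomp A (mcomp P \<tau>) n u" unfolding I7f ..
    also have "\<dots> = mcomp (mcomp A P) \<tau> n u" by (rule mcomp_assoc[OF Aa, symmetric])
    finally show ?thesis .
  qed
  have AutA: "Aut A" unfolding A_def by (rule Aut_A[OF a K])
  have CompAB: "Comp A B" unfolding A_def B_def by (rule Comp_AB[OF a K])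
  show ?thesis unfolding Inv_def e1 e2 e3
  proof (intro conjI)
    show "Def (solveM K (\<rho> a) (mcomp A \<sigma>))" using st by blast
    show "\<forall>i. Vector_Spaces.linear sv sg (solveM K (\<rho> a) (mcomp A \<sigma>) i)" using st by blast
    show "solveM K (\<rho> a) (mcomp A \<sigma>) 0 = T" using st by blast
    show "\<forall>j u. 1 \<le> j \<longrightarrow> j \<le> Suc k \<longrightarrow> solveM K (\<rho> a) (mcomp A \<sigma>) j u = 0"
      using st unfolding K_def by blast
    show "\<forall>i. Vector_Spaces.linear sg sg (mcomp A P i)"
      by (intro allI lin_mcomp[OF vsg vsg vsg AL PL])
    show "\<forall>i. Vector_Spaces.linear sv sv (mcomp B Q i)"
      by (intro allI lin_mcomp[OF vsv vsv vsv BL QL])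
    show "Aut (mcomp A P)" by (rule Aut_comp[OF AutA AP Aa Pa])
    show "Comp (mcomp A P) (mcomp B Q)" by (rule Comp_comp[OF CompAB CPQ Aa Ba])
    show "\<forall>n u. mcomp (solveM K (\<rho> a) (mcomp A \<sigma>)) (mcomp B Q) n u = mcomp (mcomp A P) \<tau> n u"
      using I7' unfolding \<sigma>'_def by blast
  qed
qed

lemma Inv: "Inv k" by (induct k) (auto intro: Inv0 InvS)

lemma stabP: "n \<le> m \<Longrightarrow> PP m n = PP n n"
proof (induct m)
  case 0 then show ?case by simp
next
  case (Suc m)
  show ?case
  proof (cases "n = Suc m")
    case True then show ?thesis by simp
  next
    case False
    then have "n \<le> m" using Suc by simp
    have "PP (Suc m) n = PP m n" unfolding PPS
      by (rule ext, subst mcomp_Aser_left) (use \<open>n \<le> m\<close> in auto)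
    then show ?thesis using Suc \<open>n \<le> m\<close> by simp
  qed
qed

lemma stabQ: "n \<le> m \<Longrightarrow> QQ m n = QQ n n"
proof (induct m)
  case 0 then show ?case by simp
next
  case (Suc m)
  show ?case
  proof (cases "n = Suc m")
    case True then show ?thesis by simp
  next
    case False
    then have "n \<le> m" using Suc by simp
    have "QQ (Suc m) n = QQ m n" unfolding QQS
      by (rule ext, subst mcomp_Aser_left) (use \<open>n \<le> m\<close> in auto)
    then show ?thesis using Suc \<open>n \<le> m\<close> by simp
  qed
qed


lemma final: "trivial_deformation sg br sv \<rho> T \<tau>"
proof -
  define \<phi> where "\<phi> = (\<lambda>n. PP n n)"
  define \<psi> where "\<psi> = (\<lambda>n. QQ n n)"
  define x where "x = pick \<tau> 1"
  have IP: "Vector_Spaces.linear sg sg (PP k i)" for k i using Inv[of k] unfolding Inv_def by blast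
  have IQ: "Vector_Spaces.linear sv sv (QQ k i)" for k i using Inv[of k] unfolding Inv_def by blast
  have pL: "Vector_Spaces.linear sg sg (\<phi> i)" for i unfolding \<phi>_def by (rule IP)
  have qL: "Vector_Spaces.linear sv sv (\<psi> i)" for i unfolding \<psi>_def by (rule IQ)
  have Pz: "PP k i 0 = 0" for k i by (rule addf_0[OF linear_addf[OF IP]])
  have Qz: "QQ k i 0 = 0" for k i by (rule addf_0[OF linear_addf[OF IQ]])
  have SPn: "PP n i = \<phi> i" if "i \<le> n" for n i unfolding \<phi>_def using stabP[OF that] .
  have SQn: "QQ n i = \<psi> i" if "i \<le> n" for n i unfolding \<psi>_def using stabQ[OF that] .
  have adP: "app (PP k) (d0 y) = (\<lambda>m. PP k m y)" for k y by (rule ext, rule app_d0) (rule Pz)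
  have adQ: "app (QQ k) (d0 y) = (\<lambda>m. QQ k m y)" for k y by (rule ext, rule app_d0) (rule Qz)
  have cb: "conv br (d0 y) (d0 z) = d0 (br y z)" for y z
    by (rule ext, subst conv_d0_1) (auto simp: d0_def)
  have cr: "conv \<rho> (d0 y) (d0 u) = d0 (\<rho> y u)" for y u
    by (rule ext, subst conv_d0_1) (auto simp: d0_def)
  have p0: "\<phi> 0 = id" unfolding \<phi>_def PP0 idser_def by simp
  have q0: "\<psi> 0 = id" unfolding \<psi>_def QQ0 idser_def by simp
  have p1: "\<phi> 1 = br x" unfolding \<phi>_def x_def
    using PPS[of 0] unfolding PP0 SG0 by (intro ext) (simp add: mcomp_Aser_left idser_def)
  have q1: "\<psi> 1 = \<rho> x" unfolding \<psi>_def x_def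
    using QQS[of 0] unfolding QQ0 SG0 by (intro ext) (simp add: mcomp_Aser_left idser_def)
  have c7: "(\<Sum>i\<le>n. br (\<phi> i y) (\<phi> (n - i) z)) = \<phi> n (br y z)" for n y z
  proof -
    have "Aut (PP n)" using Inv[of n] unfolding Inv_def by blast
    then have "conv br (app (PP n) (d0 y)) (app (PP n) (d0 z)) n = app (PP n) (conv br (d0 y) (d0 z)) n"
      unfolding Aut_def by blast
    then have "(\<Sum>i\<le>n. br (PP n i y) (PP n (n - i) z)) = PP n n (br y z)"
      unfolding adP cb unfolding conv_def by simp
    moreover have "(\<Sum>i\<le>n. br (PP n i y) (PP n (n - i) z)) = (\<Sum>i\<le>n. br (\<phi> i y) (\<phi> (n - i) z))"
      by (rule sum.cong) (simp_all add: SPn)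
    ultimately show ?thesis using SPn[of n n] by simp
  qed
  have c9: "\<psi> n (\<rho> y u) = (\<Sum>i\<le>n. \<rho> (\<phi> i y) (\<psi> (n - i) u))" for n y u
  proof -
    have "Comp (PP n) (QQ n)" using Inv[of n] unfolding Inv_def by blast
    then have "app (QQ n) (conv \<rho> (d0 y) (d0 u)) n = conv \<rho> (app (PP n) (d0 y)) (app (QQ n) (d0 u)) n"
      unfolding Comp_def by blast
    then have "QQ n n (\<rho> y u) = (\<Sum>i\<le>n. \<rho> (PP n i y) (QQ n (n - i) u))"
      unfolding adP adQ cr unfolding conv_def by simp
    moreover have "(\<Sum>i\<le>n. \<rho> (PP n i y) (QQ n (n - i) u)) = (\<Sum>i\<le>n. \<rho> (\<phi> i y) (\<psi> (n - i) u))"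
      by (rule sum.cong) (simp_all add: SPn SQn)
    ultimately show ?thesis using SQn[of n n] by simp
  qed
  have c8: "(\<Sum>i\<le>n. (if i = 0 then T else (\<lambda>_. 0)) (\<psi> (n - i) u)) = (\<Sum>i\<le>n. \<phi> i (\<tau> (n - i) u))" for n u
  proof -
    have I: "Inv n" by (rule Inv)
    have "(\<Sum>i\<le>n. (if i = 0 then T else (\<lambda>_. 0)) (\<psi> (n - i) u)) = (\<Sum>i\<le>n. if i = 0 then T (\<psi> n u) else 0)"
      by (rule sum.cong) auto
    also have "\<dots> = T (\<psi> n u)" by simp
    also have "\<dots> = (\<Sum>i\<le>n. SG n i (QQ n (n - i) u))"
    proof -
      have "(\<Sum>i\<le>n. SG n i (QQ n (n - i) u)) = (\<Sum>i\<le>n. if i = 0 then T (\<psi> n u) else 0)"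
      proof (rule sum.cong)
        fix i assume "i \<in> {..n}"
        then show "SG n i (QQ n (n - i) u) = (if i = 0 then T (\<psi> n u) else 0)"
          using I unfolding Inv_def \<psi>_def by auto
      qed simp
      then show ?thesis by simp
    qed
    also have "\<dots> = mcomp (SG n) (QQ n) n u" unfolding mcomp_def ..
    also have "\<dots> = mcomp (PP n) \<tau> n u" using I unfolding Inv_def by blast
    also have "\<dots> = (\<Sum>i\<le>n. \<phi> i (\<tau> (n - i) u))" unfolding mcomp_def
      by (rule sum.cong) (simp_all add: SPn)
    finally show ?thesis .
  qed
  show ?thesis unfolding trivial_deformation_def deformations_equivalent_def
    apply (rule exI[of _ x], rule exI[of _ \<phi>], rule exI[of _ \<psi>])
    using p0 p1 q0 q1 pL qL c7 c8 c9 by blast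
qed

end


theorem proposition5p9:
  fixes sg :: "'k::field \<Rightarrow> 'g \<Rightarrow> 'g::ab_group_add"
    and br :: "'g \<Rightarrow> 'g \<Rightarrow> 'g"
    and sv :: "'k \<Rightarrow> 'v \<Rightarrow> 'v::ab_group_add"
    and \<rho> :: "'g \<Rightarrow> 'v \<Rightarrow> 'v"
    and T :: "'v \<Rightarrow> 'g"
  assumes "O_operator sg br sv \<rho> T"
    and "Z1 sg br sv \<rho> T = d_rhobar br \<rho> T ` Nij br \<rho> T"
  shows "rigid sg br sv \<rho> T"
  unfolding rigid_def
proof (intro allI impI)
  fix \<tau> assume fd: "formal_deformation sg br sv \<rho> T \<tau>"
  interpret R: Rig sg br sv \<rho> T \<tau>
    by unfold_locales (rule assms(1), rule assms(2), rule fd)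
  show "trivial_deformation sg br sv \<rho> T \<tau>" by (rule R.final)
qed

end
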